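(* Let $(S,d)$ and $(S',d')$ be Polish spaces and let $g:S'\times S\to\mathbb{R}$ be a (Borel measurable) map that is $K$-Lipschitz in the second variable, i.e. $|g(x,y)-g(x,z)|\le K\,d(y,z)$ for all $x\in S'$, $y,z\in S$. Let $X$ be an $S'$-valued random variable and $Y,Z$ be $S$-valued random variables with $X$ independent of $Y$ and $X$ independent of $Z$, and suppose the cumulative distribution function of $g(X,Y)$ is Lipschitz with constant $L$. Then for all $x\in\mathbb{R}$, $|\mathbb{P}(g(X,Y)\le x)-\mathbb{P}(g(X,Z)\le x)|\le(1+L)(1\vee K)\,\rho_P^S(Y,Z)$.
   Context: For a Polish space $(S,d)$ and $\mu,\nu\in\mathcal{P}(S)$, the Prokhorov distance is $\rho_P^S(\mu,\nu)=\inf\{\epsilon>0:\mu(B)\le\nu(B^\epsilon)+\epsilon\text{ for all Borel sets }B\}$, where $B^\epsilon=\{x\in S:d(x,B)<\epsilon\}$; for $S$-valued random variables $U,V$, $\rho_P^S(U,V)=\rho_P^S(\operatorname{law}(U),\operatorname{law}(V))$. $a\vee b=\max(a,b)$. *)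

theory Defs
  imports "HOL-Probability.Probability"
begin

definition eps_nbhd :: "real \<Rightarrow> 'a::metric_space set \<Rightarrow> 'a set" where
  "eps_nbhd \<epsilon> B = {x. \<exists>b\<in>B. dist x b < \<epsilon>}"

definition prokhorov :: "'a::metric_space measure \<Rightarrow> 'a measure \<Rightarrow> real" where
  "prokhorov \<mu> \<nu> = Inf {\<epsilon>. \<epsilon> > 0 \<and>
      (\<forall>B \<in> sets (borel :: 'a measure). measure \<mu> B \<le> measure \<nu> (eps_nbhd \<epsilon> B) + \<epsilon>)}"

end

theory Submission
  imports Defs
begin

lemma prod_of_indep:
  assumes P: "prob_space M" and mX: "X \<in> measurable M borel" and mY: "Y \<in> measurable M borel"
   and ind: "prob_space.indep_set M {X -` A \<inter> space M | A. A \<in> sets borel}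
                     {Y -` B \<inter> space M | B. B \<in> sets borel}"
  shows "distr M borel X \<Otimes>\<^sub>M distr M borel Y = distr M (borel \<Otimes>\<^sub>M borel) (\<lambda>x. (X x, Y x))"
proof -
  interpret prob_space M by fact
  interpret PX: prob_space "distr M borel X" by (rule prob_space_distr[OF mX])
  interpret PY: prob_space "distr M borel Y" by (rule prob_space_distr[OF mY])
  have m: "(\<lambda>x. (X x, Y x)) \<in> measurable M (borel \<Otimes>\<^sub>M borel)" using mX mY by measurable
  have mult: "prob (a \<inter> b) = prob a * prob b"
    if "a \<in> {X -` A \<inter> space M | A. A \<in> sets borel}" "b \<in> {Y -` B \<inter> space M | B. B \<in> sets borel}" for a b
    using ind that unfolding indep_sets2_eq by blast
  show ?thesis
  proof (rule pair_measure_eqI)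
    show "sigma_finite_measure (distr M borel X)" "sigma_finite_measure (distr M borel Y)"
      by unfold_locales
    show "sets (distr M borel X \<Otimes>\<^sub>M distr M borel Y) = sets (distr M (borel \<Otimes>\<^sub>M borel) (\<lambda>x. (X x, Y x)))"
      by simp
    fix A B assume A: "A \<in> sets (distr M borel X)" and B: "B \<in> sets (distr M borel Y)"
    have AB: "A \<times> B \<in> sets (borel \<Otimes>\<^sub>M borel)" using A B by auto
    have "emeasure (distr M (borel \<Otimes>\<^sub>M borel) (\<lambda>x. (X x, Y x))) (A \<times> B)
        = emeasure M ((X -` A \<inter> space M) \<inter> (Y -` B \<inter> space M))"
      by (subst emeasure_distr[OF m AB]) (auto intro!: arg_cong[where f="emeasure M"])
    also have "\<dots> = ennreal (prob ((X -` A \<inter> space M) \<inter> (Y -` B \<inter> space M)))"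
      by (simp add: emeasure_eq_measure)
    also have "prob ((X -` A \<inter> space M) \<inter> (Y -` B \<inter> space M)) = prob (X -` A \<inter> space M) * prob (Y -` B \<inter> space M)"
      using A B by (intro mult) auto
    also have "ennreal \<dots> = emeasure (distr M borel X) A * emeasure (distr M borel Y) B"
      using A B mX mY by (simp add: emeasure_distr emeasure_eq_measure ennreal_mult)
    finally show "emeasure (distr M borel X) A * emeasure (distr M borel Y) B =
        emeasure (distr M (borel \<Otimes>\<^sub>M borel) (\<lambda>x. (X x, Y x))) (A \<times> B)" by simp
  qed
qed

lemma transfer:
  assumes P: "prob_space M" and rvX: "X \<in> measurable M borel"
    and rvY: "Y \<in> measurable M borel" and rvZ: "Z \<in> measurable M borel"
    and dY: "distr M borel X \<Otimes>\<^sub>M distr M borel Y = distr M (borel \<Otimes>\<^sub>M borel) (\<lambda>x. (X x, Y x))"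
    and dZ: "distr M borel X \<Otimes>\<^sub>M distr M borel Z = distr M (borel \<Otimes>\<^sub>M borel) (\<lambda>x. (X x, Z x))"
    and S: "S \<in> sets (borel \<Otimes>\<^sub>M borel)" and T: "T \<in> sets (borel \<Otimes>\<^sub>M borel)"
    and h: "\<And>a. measure (distr M borel Y) (Pair a -` S) \<le> measure (distr M borel Z) (Pair a -` T) + e"
    and e: "e \<ge> 0"
  shows "measure M {\<omega>\<in>space M. (X \<omega>, Y \<omega>) \<in> S} \<le> measure M {\<omega>\<in>space M. (X \<omega>, Z \<omega>) \<in> T} + e"
proof -
  interpret prob_space M by fact
  note rv = rvX rvY rvZ
  let ?PX = "distr M borel X" and ?PY = "distr M borel Y" and ?PZ = "distr M borel Z"
  interpret PX: prob_space ?PX by (rule prob_space_distr[OF rv(1)])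
  interpret PY: prob_space ?PY by (rule prob_space_distr[OF rv(2)])
  interpret PZ: prob_space ?PZ by (rule prob_space_distr[OF rv(3)])
  interpret XY: pair_prob_space ?PX ?PY ..
  interpret XZ: pair_prob_space ?PX ?PZ ..
  have mY: "(\<lambda>x. (X x, Y x)) \<in> measurable M (borel \<Otimes>\<^sub>M borel)" using rv by measurable
  have mZ: "(\<lambda>x. (X x, Z x)) \<in> measurable M (borel \<Otimes>\<^sub>M borel)" using rv by measurable
  have eqY: "measure M {\<omega>\<in>space M. (X \<omega>, Y \<omega>) \<in> S} = measure (?PX \<Otimes>\<^sub>M ?PY) S"
    unfolding dY using S mY by (subst measure_distr) (auto intro!: arg_cong[where f="measure M"])
  have eqZ: "measure M {\<omega>\<in>space M. (X \<omega>, Z \<omega>) \<in> T} = measure (?PX \<Otimes>\<^sub>M ?PZ) T"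
    unfolding dZ using T mZ by (subst measure_distr) (auto intro!: arg_cong[where f="measure M"])
  have SS: "S \<in> sets (?PX \<Otimes>\<^sub>M ?PY)" using S by simp
  have TT: "T \<in> sets (?PX \<Otimes>\<^sub>M ?PZ)" using T by simp
  have "emeasure (?PX \<Otimes>\<^sub>M ?PY) S = (\<integral>\<^sup>+x. emeasure ?PY (Pair x -` S) \<partial>?PX)"
    by (rule PY.emeasure_pair_measure_alt[OF SS])
  also have "\<dots> \<le> (\<integral>\<^sup>+x. emeasure ?PZ (Pair x -` T) + ennreal e \<partial>?PX)"
  proof (rule nn_integral_mono)
    fix a
    have "emeasure ?PY (Pair a -` S) = ennreal (measure ?PY (Pair a -` S))"
      by (simp add: PY.emeasure_eq_measure)
    also have "\<dots> \<le> ennreal (measure ?PZ (Pair a -` T) + e)" using h[of a] by (rule ennreal_leI)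
    also have "\<dots> = emeasure ?PZ (Pair a -` T) + ennreal e"
      using e by (simp add: PZ.emeasure_eq_measure ennreal_plus)
    finally show "emeasure ?PY (Pair a -` S) \<le> emeasure ?PZ (Pair a -` T) + ennreal e" .
  qed
  also have "\<dots> = (\<integral>\<^sup>+x. emeasure ?PZ (Pair x -` T) \<partial>?PX) + ennreal e"
  proof -
    have m: "(\<lambda>x. emeasure ?PZ (Pair x -` T)) \<in> borel_measurable ?PX"
      by (rule XZ.measurable_emeasure_Pair1[OF TT])
    show ?thesis
      by (subst nn_integral_add) (use m PX.emeasure_space_1 in auto)
  qed
  also have "\<dots> = emeasure (?PX \<Otimes>\<^sub>M ?PZ) T + ennreal e"
    by (simp add: PZ.emeasure_pair_measure_alt[OF TT])
  finally have "ennreal (measure (?PX \<Otimes>\<^sub>M ?PY) S) \<le> ennreal (measure (?PX \<Otimes>\<^sub>M ?PZ) T + e)"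
    using e by (simp add: XY.emeasure_eq_measure XZ.emeasure_eq_measure ennreal_plus)
  then have "measure (?PX \<Otimes>\<^sub>M ?PY) S \<le> measure (?PX \<Otimes>\<^sub>M ?PZ) T + e"
    using e by (subst (asm) ennreal_le_iff) (auto intro: add_nonneg_nonneg)
  then show ?thesis using eqY eqZ by simp
qed


theorem corollary3p8:
  fixes M :: "'w measure"
    and g :: "'b::polish_space \<Rightarrow> 'a::polish_space \<Rightarrow> real"
    and X :: "'w \<Rightarrow> 'b" and Y Z :: "'w \<Rightarrow> 'a"
    and K L :: real
  assumes "prob_space M"
    and g_meas: "(\<lambda>(x, y). g x y) \<in> borel_measurable (borel \<Otimes>\<^sub>M borel)"
    and g_lip: "\<forall>x. K-lipschitz_on UNIV (g x)"
    and X_rv: "X \<in> measurable M borel"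
    and Y_rv: "Y \<in> measurable M borel"
    and Z_rv: "Z \<in> measurable M borel"
    and indep_XY: "prob_space.indep_set M {X -` A \<inter> space M | A. A \<in> sets borel}
                     {Y -` B \<inter> space M | B. B \<in> sets borel}"
    and indep_XZ: "prob_space.indep_set M {X -` A \<inter> space M | A. A \<in> sets borel}
                     {Z -` B \<inter> space M | B. B \<in> sets borel}"
    and cdf_lip: "L-lipschitz_on UNIV (cdf (distr M borel (\<lambda>\<omega>. g (X \<omega>) (Y \<omega>))))"
  shows "\<forall>x::real. \<bar>measure M {\<omega> \<in> space M. g (X \<omega>) (Y \<omega>) \<le> x}
                    - measure M {\<omega> \<in> space M. g (X \<omega>) (Z \<omega>) \<le> x}\<bar>
           \<le> (1 + L) * max 1 K * prokhorov (distr M borel Y) (distr M borel Z)"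
proof
  fix x :: real
  have iY: "distr M borel X \<Otimes>\<^sub>M distr M borel Y = distr M (borel \<Otimes>\<^sub>M borel) (\<lambda>x. (X x, Y x))" by (rule prod_of_indep[OF \<open>prob_space M\<close> X_rv Y_rv indep_XY])
  have iZ: "distr M borel X \<Otimes>\<^sub>M distr M borel Z = distr M (borel \<Otimes>\<^sub>M borel) (\<lambda>x. (X x, Z x))" by (rule prod_of_indep[OF \<open>prob_space M\<close> X_rv Z_rv indep_XZ])
  interpret prob_space M by fact
  let ?PY = "distr M borel Y" and ?PZ = "distr M borel Z"
  interpret PY: prob_space ?PY by (rule prob_space_distr[OF Y_rv])
  interpret PZ: prob_space ?PZ by (rule prob_space_distr[OF Z_rv])
  have K0: "K \<ge> 0" using g_lip lipschitz_on_nonneg by blast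
  have L0: "L \<ge> 0" using cdf_lip lipschitz_on_nonneg by blast
  define Pset where "Pset = {\<epsilon>. \<epsilon> > 0 \<and>
      (\<forall>B \<in> sets (borel :: 'a measure). measure ?PY B \<le> measure ?PZ (eps_nbhd \<epsilon> B) + \<epsilon>)}"
  define \<rho> where "\<rho> = prokhorov ?PY ?PZ"
  have rho: "\<rho> = Inf Pset" unfolding \<rho>_def Pset_def prokhorov_def ..
  have nbhd_open: "eps_nbhd e B \<in> sets borel" for e and B :: "'a set"
  proof -
    have "eps_nbhd e B = (\<Union>b\<in>B. ball b e)" by (auto simp: eps_nbhd_def dist_commute)
    then show ?thesis by (metis borel_open open_UN open_ball)
  qed
  have "1 \<in> Pset" unfolding Pset_def
    using PY.prob_le_1 by (auto intro: order_trans[of _ 1])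
  then have ne: "Pset \<noteq> {}" by auto
  have bdd: "bdd_below Pset" unfolding Pset_def by (rule bdd_belowI[of _ 0]) auto
  have rho0: "\<rho> \<ge> 0" unfolding rho using ne by (rule cInf_greatest) (auto simp: Pset_def)
  have good: "measure ?PY B \<le> measure ?PZ (eps_nbhd \<epsilon> B) + \<epsilon>"
    if epsr: "\<epsilon> > \<rho>" and Bs: "B \<in> sets borel" for \<epsilon> B
  proof -
    obtain e0 where e0: "e0 \<in> Pset" "e0 < \<epsilon>" using cInf_lessD[OF ne, of \<epsilon>] epsr rho by auto
    then have "measure ?PY B \<le> measure ?PZ (eps_nbhd e0 B) + e0" using Bs by (auto simp: Pset_def)
    also have "measure ?PZ (eps_nbhd e0 B) \<le> measure ?PZ (eps_nbhd \<epsilon> B)"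
    proof (rule PZ.finite_measure_mono)
      show "eps_nbhd e0 B \<subseteq> eps_nbhd \<epsilon> B" using e0(2) unfolding eps_nbhd_def
        by (auto intro: less_trans)
    qed (simp add: nbhd_open)
    finally show ?thesis using e0 by simp
  qed
  define GY where "GY = (\<lambda>\<omega>. g (X \<omega>) (Y \<omega>))"
  define GZ where "GZ = (\<lambda>\<omega>. g (X \<omega>) (Z \<omega>))"
  have mGY: "GY \<in> borel_measurable M"
    using measurable_comp[OF measurable_Pair[OF X_rv Y_rv] g_meas] by (simp add: GY_def comp_def)
  have mGZ: "GZ \<in> borel_measurable M"
    using measurable_comp[OF measurable_Pair[OF X_rv Z_rv] g_meas] by (simp add: GZ_def comp_def)
  define F where "F = (\<lambda>t. measure M {\<omega> \<in> space M. GY \<omega> \<le> t})"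
  define Q where "Q = (\<lambda>t. measure M {\<omega> \<in> space M. GZ \<omega> \<le> t})"
  have Fcdf: "F t = cdf (distr M borel GY) t" for t
    unfolding F_def cdf_def using mGY
    by (subst measure_distr) (auto intro!: arg_cong[where f="measure M"])
  have Flip: "\<bar>F s - F t\<bar> \<le> L * \<bar>s - t\<bar>" for s t
    using lipschitz_onD[OF cdf_lip, of s t] unfolding Fcdf GY_def by (simp add: dist_real_def)
  have Sets: "{(a, b). g a b \<le> c} \<in> sets (borel \<Otimes>\<^sub>M borel)" for c
  proof -
    have "(\<lambda>(x, y). g x y) -` {..c} \<inter> space (borel \<Otimes>\<^sub>M borel) \<in> sets (borel \<Otimes>\<^sub>M borel)"
      by (rule measurable_sets[OF g_meas]) auto
    moreover have "(\<lambda>(x, y). g x y) -` {..c} \<inter> space (borel \<Otimes>\<^sub>M borel) = {(a, b). g a b \<le> c}"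
      by (auto simp: space_pair_measure)
    ultimately show ?thesis by simp
  qed
  have Sets2: "{(a, b). g a b > c} \<in> sets (borel \<Otimes>\<^sub>M borel)" for c
  proof -
    have "(\<lambda>(x, y). g x y) -` {c<..} \<inter> space (borel \<Otimes>\<^sub>M borel) \<in> sets (borel \<Otimes>\<^sub>M borel)"
      by (rule measurable_sets[OF g_meas]) auto
    moreover have "(\<lambda>(x, y). g x y) -` {c<..} \<inter> space (borel \<Otimes>\<^sub>M borel) = {(a, b). g a b > c}"
      by (auto simp: space_pair_measure)
    ultimately show ?thesis by simp
  qed
  have slice_le: "{b. g a b \<le> c} \<in> sets borel" for a c
    using sets_Pair1[OF Sets[of c], of a] by (simp add: vimage_def)
  have slice_gt: "{b. g a b > c} \<in> sets borel" for a c
    using sets_Pair1[OF Sets2[of c], of a] by (simp add: vimage_def)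
  have lipg: "g a y \<le> g a b + K * dist y b" for a y b
    using lipschitz_onD[OF g_lip[rule_format, of a], of y b] by (simp add: dist_real_def abs_le_iff)
  have bound: "\<bar>F x - Q x\<bar> \<le> (1 + L * K) * \<epsilon>" if eps: "\<epsilon> > \<rho>" for \<epsilon>
  proof -
    have e0: "\<epsilon> \<ge> 0" using eps rho0 by simp
    have A: "F (x - K * \<epsilon>) \<le> Q x + \<epsilon>"
    proof -
      have "measure M {\<omega>\<in>space M. (X \<omega>, Y \<omega>) \<in> {(a, b). g a b \<le> x - K * \<epsilon>}}
          \<le> measure M {\<omega>\<in>space M. (X \<omega>, Z \<omega>) \<in> {(a, b). g a b \<le> x}} + \<epsilon>"
      proof (rule transfer[OF \<open>prob_space M\<close> X_rv Y_rv Z_rv iY iZ Sets Sets _ e0])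
        fix a
        have "measure ?PY {b. g a b \<le> x - K * \<epsilon>}
            \<le> measure ?PZ (eps_nbhd \<epsilon> {b. g a b \<le> x - K * \<epsilon>}) + \<epsilon>"
          by (rule good[OF eps slice_le])
        also have "measure ?PZ (eps_nbhd \<epsilon> {b. g a b \<le> x - K * \<epsilon>}) \<le> measure ?PZ {b. g a b \<le> x}"
        proof (rule PZ.finite_measure_mono)
          show "eps_nbhd \<epsilon> {b. g a b \<le> x - K * \<epsilon>} \<subseteq> {b. g a b \<le> x}"
          proof
            fix y assume "y \<in> eps_nbhd \<epsilon> {b. g a b \<le> x - K * \<epsilon>}"
            then obtain b where b: "g a b \<le> x - K * \<epsilon>" "dist y b < \<epsilon>" by (auto simp: eps_nbhd_def)
            have "K * dist y b \<le> K * \<epsilon>" using b(2) K0 by (intro mult_left_mono) auto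
            then show "y \<in> {b. g a b \<le> x}" using lipg[of a y b] b(1) by simp
          qed
        qed (simp add: slice_le)
        finally show "measure ?PY (Pair a -` {(a, b). g a b \<le> x - K * \<epsilon>})
            \<le> measure ?PZ (Pair a -` {(a, b). g a b \<le> x}) + \<epsilon>" by (simp add: vimage_def)
      qed
      then show ?thesis by (simp add: F_def Q_def GY_def GZ_def)
    qed
    have B: "1 - Q x \<ge> 1 - F (x + K * \<epsilon>) - \<epsilon>"
    proof -
      have "measure M {\<omega>\<in>space M. (X \<omega>, Y \<omega>) \<in> {(a, b). g a b > x + K * \<epsilon>}}
          \<le> measure M {\<omega>\<in>space M. (X \<omega>, Z \<omega>) \<in> {(a, b). g a b > x}} + \<epsilon>"
      proof (rule transfer[OF \<open>prob_space M\<close> X_rv Y_rv Z_rv iY iZ Sets2 Sets2 _ e0])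
        fix a
        have "measure ?PY {b. g a b > x + K * \<epsilon>}
            \<le> measure ?PZ (eps_nbhd \<epsilon> {b. g a b > x + K * \<epsilon>}) + \<epsilon>"
          by (rule good[OF eps slice_gt])
        also have "measure ?PZ (eps_nbhd \<epsilon> {b. g a b > x + K * \<epsilon>}) \<le> measure ?PZ {b. g a b > x}"
        proof (rule PZ.finite_measure_mono)
          show "eps_nbhd \<epsilon> {b. g a b > x + K * \<epsilon>} \<subseteq> {b. g a b > x}"
          proof
            fix y assume "y \<in> eps_nbhd \<epsilon> {b. g a b > x + K * \<epsilon>}"
            then obtain b where b: "g a b > x + K * \<epsilon>" "dist y b < \<epsilon>" by (auto simp: eps_nbhd_def)
            have "K * dist y b \<le> K * \<epsilon>" using b(2) K0 by (intro mult_left_mono) auto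
            then show "y \<in> {b. g a b > x}" using lipg[of a b y] b(1) by (simp add: dist_commute)
          qed
        qed (simp add: slice_gt)
        finally show "measure ?PY (Pair a -` {(a, b). g a b > x + K * \<epsilon>})
            \<le> measure ?PZ (Pair a -` {(a, b). g a b > x}) + \<epsilon>" by (simp add: vimage_def)
      qed
      moreover have "measure M {\<omega>\<in>space M. (X \<omega>, Y \<omega>) \<in> {(a, b). g a b > t}} = 1 - F t" for t
      proof -
        have "{\<omega>\<in>space M. (X \<omega>, Y \<omega>) \<in> {(a, b). g a b > t}} = space M - {\<omega> \<in> space M. GY \<omega> \<le> t}"
          by (auto simp: GY_def)
        moreover have "{\<omega> \<in> space M. GY \<omega> \<le> t} \<in> events" using mGY by measurable
        ultimately show ?thesis by (simp add: prob_compl F_def)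
      qed
      moreover have "measure M {\<omega>\<in>space M. (X \<omega>, Z \<omega>) \<in> {(a, b). g a b > t}} = 1 - Q t" for t
      proof -
        have "{\<omega>\<in>space M. (X \<omega>, Z \<omega>) \<in> {(a, b). g a b > t}} = space M - {\<omega> \<in> space M. GZ \<omega> \<le> t}"
          by (auto simp: GZ_def)
        moreover have "{\<omega> \<in> space M. GZ \<omega> \<le> t} \<in> events" using mGZ by measurable
        ultimately show ?thesis by (simp add: prob_compl Q_def)
      qed
      ultimately show ?thesis by simp
    qed
    have KE: "K * \<epsilon> \<ge> 0" using K0 e0 by simp
    have f1: "F x \<le> F (x - K * \<epsilon>) + L * (K * \<epsilon>)" using Flip[of x "x - K * \<epsilon>"] KE by simp
    have f2: "F (x + K * \<epsilon>) \<le> F x + L * (K * \<epsilon>)" using Flip[of "x + K * \<epsilon>" x] KE by simp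
    show ?thesis using A B f1 f2 by (simp add: algebra_simps abs_le_iff)
  qed
  define c where "c = (1 + L) * max 1 K"
  have c1: "c \<ge> 1"
  proof -
    have "1 * 1 \<le> (1 + L) * max 1 K" using L0 by (intro mult_mono) auto
    then show ?thesis by (simp add: c_def)
  qed
  have cle: "(1 + L * K) * \<epsilon> \<le> c * \<epsilon>" if "\<epsilon> \<ge> 0" for \<epsilon>
  proof -
    have "L * K \<le> L * max 1 K" using L0 by (intro mult_left_mono) auto
    moreover have "1 \<le> max 1 K" by simp
    ultimately have "1 + L * K \<le> max 1 K + L * max 1 K" by linarith
    then have "1 + L * K \<le> c" unfolding c_def by (simp add: algebra_simps)
    then show ?thesis using that by (intro mult_right_mono)
  qed
  have "\<bar>F x - Q x\<bar> \<le> c * \<rho>"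
  proof (rule field_le_epsilon)
    fix e :: real assume e: "e > 0"
    have "\<rho> + e / c > \<rho>" using e c1 by simp
    then have "\<bar>F x - Q x\<bar> \<le> (1 + L * K) * (\<rho> + e / c)" by (rule bound)
    also have "\<dots> \<le> c * (\<rho> + e / c)" using rho0 e c1 by (intro cle) simp
    also have "\<dots> = c * \<rho> + e" using c1 by (simp add: field_simps)
    finally show "\<bar>F x - Q x\<bar> \<le> c * \<rho> + e" .
  qed
  then show "\<bar>measure M {\<omega> \<in> space M. g (X \<omega>) (Y \<omega>) \<le> x}
                    - measure M {\<omega> \<in> space M. g (X \<omega>) (Z \<omega>) \<le> x}\<bar>
           \<le> (1 + L) * max 1 K * prokhorov (distr M borel Y) (distr M borel Z)"
    by (simp add: F_def Q_def GY_def GZ_def c_def \<rho>_def)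
qed

end
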